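(* Let $\mathbf{x}\in\mathcal{P}$, and let the quantities $\tilde x_{v,s,t}$, $r_{v,s,t}$, $J_{v,t}$ be computed by the SN dynamic programs using $\mathbf{x}$ as the ex ante solution. Then for every volunteer $v\in[V]$, $J_{v,1}\ge\frac{1}{2-q}f_v(\mathbf{x})$, where $q$ is the minimum discrete hazard rate of $g$.
   Context: Data: volunteers $[V]$, task types $[S]$, horizon $T$, $\lambda_{s,t}\ge0$ with $\sum_{s=1}^S\lambda_{s,t}\le1$ and $\lambda_{0,t}=1-\sum_{s=1}^S\lambda_{s,t}$, $p_{v,s}\in[0,1]$, a probability mass function $g$ on the positive integers with CDF $G(\tau)=\sum_{i\le\tau}g(i)$, $G(0)=0$. MDHR: $q=\min_{\tau\in\mathbb{N}}\frac{g(\tau)}{1-G(\tau-1)}$ (with $\frac00:=1$). $\mathcal{P}$: set of $\mathbf{x}\in\mathbb{R}^{V\times S\times T}$ with $0\le x_{v,s,t}\le1$ and $\sum_{\tau=1}^t\sum_{s=1}^S\lambda_{s,\tau}x_{v,s,\tau}(1-G(t-\tau))\le1$ for all $v,t$. $f_v(\mathbf{x})=\sum_{t=1}^T\sum_{s=1}^S\lambda_{s,t}\big(\prod_{u<v}(1-p_{u,s}x_{u,s,t})\big)p_{v,s}x_{v,s,t}$. SN dynamic programs with ex ante solution $\mathbf{x}$: for $v=1,\dots,V$ in order: $r_{v,s,t}=p_{v,s}\prod_{u=1}^{v-1}(1-\tilde x_{u,s,t}p_{u,s})$; $J_{v,T+1}=0$; for $t=T$ down to $1$: $\tilde x_{v,s,t}=x_{v,s,t}\,\mathbb{I}\{r_{v,s,t}+\sum_{\tau=t+1}^Tg(\tau-t)J_{v,\tau}\ge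 J_{v,t+1}\}$ for $s\in[S]$ (with $\tilde x_{v,0,t}=r_{v,0,t}=0$), and $J_{v,t}=\sum_{s=0}^S\lambda_{s,t}\big((1-\tilde x_{v,s,t})J_{v,t+1}+\tilde x_{v,s,t}(r_{v,s,t}+\sum_{\tau=t+1}^Tg(\tau-t)J_{v,\tau})\big)$. *)

theory Defs
  imports Complex_Main
begin

text \<open>Conventions: volunteers are 1..V, task types 1..S, periods 1..T.
  lam s t = \<lambda>_{s,t}, p v s = p_{v,s}, x v s t = x_{v,s,t}, g i = g(i).\<close>

definition Gcdf :: "(nat \<Rightarrow> real) \<Rightarrow> nat \<Rightarrow> real" where
  "Gcdf g \<tau> = (\<Sum>i=1..\<tau>. g i)"

definition hazard :: "(nat \<Rightarrow> real) \<Rightarrow> nat \<Rightarrow> real" where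
  "hazard g \<tau> = (if g \<tau> = 0 \<and> 1 - Gcdf g (\<tau> - 1) = 0 then 1
                 else g \<tau> / (1 - Gcdf g (\<tau> - 1)))"

definition mdhr :: "(nat \<Rightarrow> real) \<Rightarrow> real" where
  "mdhr g = (INF \<tau>\<in>{1..}. hazard g \<tau>)"

definition in_polytope ::
  "nat \<Rightarrow> nat \<Rightarrow> nat \<Rightarrow> (nat \<Rightarrow> nat \<Rightarrow> real) \<Rightarrow> (nat \<Rightarrow> real) \<Rightarrow> (nat \<Rightarrow> nat \<Rightarrow> nat \<Rightarrow> real) \<Rightarrow> bool" where
  "in_polytope V S T lam g x \<longleftrightarrow>
     (\<forall>v\<in>{1..V}. \<forall>s\<in>{1..S}. \<forall>t\<in>{1..T}. 0 \<le> x v s t \<and> x v s t \<le> 1) \<and>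
     (\<forall>v\<in>{1..V}. \<forall>t\<in>{1..T}.
        (\<Sum>\<tau>=1..t. \<Sum>s=1..S. lam s \<tau> * x v s \<tau> * (1 - Gcdf g (t - \<tau>))) \<le> 1)"

definition f_obj ::
  "nat \<Rightarrow> nat \<Rightarrow> (nat \<Rightarrow> nat \<Rightarrow> real) \<Rightarrow> (nat \<Rightarrow> nat \<Rightarrow> real) \<Rightarrow> (nat \<Rightarrow> nat \<Rightarrow> nat \<Rightarrow> real) \<Rightarrow> nat \<Rightarrow> real" where
  "f_obj S T lam p x v = (\<Sum>t=1..T. \<Sum>s=1..S.
      lam s t * (\<Prod>u=1..<v. (1 - p u s * x u s t)) * p v s * x v s t)"

text \<open>One step of the backward recursion for a single volunteer, given the
  volunteer's ex ante values xv s t, the rewards r s t, and the already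
  computed values J \<tau> for \<tau> > t.\<close>
definition SN_cont :: "nat \<Rightarrow> (nat \<Rightarrow> real) \<Rightarrow> (nat \<Rightarrow> nat \<Rightarrow> real) \<Rightarrow> (nat \<Rightarrow> real) \<Rightarrow> nat \<Rightarrow> nat \<Rightarrow> real" where
  "SN_cont T g r J s t = r s t + (\<Sum>\<tau>=t+1..T. g (\<tau> - t) * J \<tau>)"

definition SN_xt :: "nat \<Rightarrow> (nat \<Rightarrow> real) \<Rightarrow> (nat \<Rightarrow> nat \<Rightarrow> real) \<Rightarrow> (nat \<Rightarrow> nat \<Rightarrow> real) \<Rightarrow> (nat \<Rightarrow> real) \<Rightarrow> nat \<Rightarrow> nat \<Rightarrow> real" where
  "SN_xt T g xv r J s t = xv s t * (if SN_cont T g r J s t \<ge> J (t + 1) then 1 else 0)"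

definition SN_Jstep ::
  "nat \<Rightarrow> nat \<Rightarrow> (nat \<Rightarrow> nat \<Rightarrow> real) \<Rightarrow> (nat \<Rightarrow> real) \<Rightarrow> (nat \<Rightarrow> nat \<Rightarrow> real) \<Rightarrow> (nat \<Rightarrow> nat \<Rightarrow> real) \<Rightarrow> (nat \<Rightarrow> real) \<Rightarrow> nat \<Rightarrow> real" where
  "SN_Jstep S T lam g xv r J t =
     (1 - (\<Sum>s=1..S. lam s t)) * J (t + 1) +
     (\<Sum>s=1..S. lam s t * ((1 - SN_xt T g xv r J s t) * J (t + 1)
                          + SN_xt T g xv r J s t * SN_cont T g r J s t))"

text \<open>After n backward steps, values J t are filled for t = T-n+1..T; all other entries
  (in particular J (T+1)) are 0.\<close>
primrec SN_Jvec ::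
  "nat \<Rightarrow> nat \<Rightarrow> (nat \<Rightarrow> nat \<Rightarrow> real) \<Rightarrow> (nat \<Rightarrow> real) \<Rightarrow> (nat \<Rightarrow> nat \<Rightarrow> real) \<Rightarrow> (nat \<Rightarrow> nat \<Rightarrow> real) \<Rightarrow> nat \<Rightarrow> nat \<Rightarrow> real" where
  "SN_Jvec S T lam g xv r 0 = (\<lambda>_. 0)"
| "SN_Jvec S T lam g xv r (Suc n) =
     (let J = SN_Jvec S T lam g xv r n in J(T - n := SN_Jstep S T lam g xv r J (T - n)))"

definition SN_Jvol ::
  "nat \<Rightarrow> nat \<Rightarrow> (nat \<Rightarrow> nat \<Rightarrow> real) \<Rightarrow> (nat \<Rightarrow> real) \<Rightarrow> (nat \<Rightarrow> nat \<Rightarrow> real) \<Rightarrow> (nat \<Rightarrow> nat \<Rightarrow> real) \<Rightarrow> nat \<Rightarrow> real" where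
  "SN_Jvol S T lam g xv r = SN_Jvec S T lam g xv r T"

text \<open>SN_P k s t = \<Prod>_{u=1..k} (1 - xtilde_{u,s,t} p_{u,s}), computed volunteer by volunteer.\<close>
primrec SN_P ::
  "nat \<Rightarrow> nat \<Rightarrow> (nat \<Rightarrow> nat \<Rightarrow> real) \<Rightarrow> (nat \<Rightarrow> real) \<Rightarrow> (nat \<Rightarrow> nat \<Rightarrow> real) \<Rightarrow> (nat \<Rightarrow> nat \<Rightarrow> nat \<Rightarrow> real) \<Rightarrow> nat \<Rightarrow> nat \<Rightarrow> nat \<Rightarrow> real" where
  "SN_P S T lam g p x 0 = (\<lambda>s t. 1)"
| "SN_P S T lam g p x (Suc k) =
     (let r = (\<lambda>s t. p (Suc k) s * SN_P S T lam g p x k s t);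
          J = SN_Jvol S T lam g (x (Suc k)) r
      in (\<lambda>s t. SN_P S T lam g p x k s t * (1 - SN_xt T g (x (Suc k)) r J s t * p (Suc k) s)))"

definition SN_r ::
  "nat \<Rightarrow> nat \<Rightarrow> (nat \<Rightarrow> nat \<Rightarrow> real) \<Rightarrow> (nat \<Rightarrow> real) \<Rightarrow> (nat \<Rightarrow> nat \<Rightarrow> real) \<Rightarrow> (nat \<Rightarrow> nat \<Rightarrow> nat \<Rightarrow> real) \<Rightarrow> nat \<Rightarrow> nat \<Rightarrow> nat \<Rightarrow> real" where
  "SN_r S T lam g p x v s t = p v s * SN_P S T lam g p x (v - 1) s t"

definition SN_J ::
  "nat \<Rightarrow> nat \<Rightarrow> (nat \<Rightarrow> nat \<Rightarrow> real) \<Rightarrow> (nat \<Rightarrow> real) \<Rightarrow> (nat \<Rightarrow> nat \<Rightarrow> real) \<Rightarrow> (nat \<Rightarrow> nat \<Rightarrow> nat \<Rightarrow> real) \<Rightarrow> nat \<Rightarrow> nat \<Rightarrow> real" where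
  "SN_J S T lam g p x v = SN_Jvol S T lam g (x v) (SN_r S T lam g p x v)"

end

theory Submission
  imports Defs
begin

lemma Gcdf_0[simp]: "Gcdf g 0 = 0" by (simp add: Gcdf_def)
lemma Gcdf_Suc: "Gcdf g (Suc n) = Gcdf g n + g (Suc n)" by (simp add: Gcdf_def)

lemma Gcdf_le1:
  assumes g_nonneg: "\<forall>i. g i \<ge> 0" and g_sums: "g sums 1"
  shows "Gcdf g k \<le> 1"
proof -
  have "Gcdf g k \<le> suminf g" unfolding Gcdf_def
    using g_sums g_nonneg by (intro sum_le_suminf) (auto simp: sums_iff)
  thus ?thesis using g_sums by (simp add: sums_iff)
qed

lemma g_le1:
  fixes g :: "nat \<Rightarrow> real"
  assumes g_nonneg: "\<forall>i. g i \<ge> 0" and g_sums: "g sums 1"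
  shows "g k \<le> 1"
proof -
  have "sum g {k} \<le> suminf g"
    using g_sums g_nonneg by (intro sum_le_suminf) (auto simp: sums_iff)
  thus ?thesis using g_sums by (simp add: sums_iff)
qed

lemma hazard_nonneg:
  assumes "\<forall>i. g i \<ge> 0" "g sums 1"
  shows "hazard g t \<ge> 0"
  using Gcdf_le1[OF assms, of "t-1"] assms(1) unfolding hazard_def by auto

lemma mdhr_le:
  assumes "\<forall>i. g i \<ge> 0" "g sums 1" "d \<ge> 1"
  shows "mdhr g \<le> hazard g d"
  unfolding mdhr_def
  by (rule cINF_lower) (use hazard_nonneg[OF assms(1,2)] assms(3) in \<open>auto intro!: bdd_belowI2\<close>)

lemma mdhr_le1:
  assumes "\<forall>i. g i \<ge> 0" "g sums 1"
  shows "mdhr g \<le> 1"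
proof -
  have "mdhr g \<le> hazard g 1" using mdhr_le[OF assms] by simp
  also have "\<dots> \<le> 1" using g_le1[OF assms, of 1] unfolding hazard_def by auto
  finally show ?thesis .
qed

lemma tail_bound:
  assumes g_nonneg: "\<forall>i. g i \<ge> 0" and g_sums: "g sums 1" and d: "d \<ge> 1"
  shows "1 - Gcdf g d \<le> (1 - mdhr g) * (1 - Gcdf g (d - 1))"
proof -
  obtain k where k: "d = Suc k" using d by (cases d) auto
  have G: "Gcdf g d = Gcdf g k + g d" using k Gcdf_Suc by simp
  have nn: "1 - Gcdf g k \<ge> 0" using Gcdf_le1[OF g_nonneg g_sums] by simp
  show ?thesis
  proof (cases "1 - Gcdf g k = 0")
    case True thus ?thesis using G k g_nonneg by simp
  next
    case False
    hence pos: "1 - Gcdf g k > 0" using nn by simp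
    have "mdhr g \<le> g d / (1 - Gcdf g k)"
      using mdhr_le[OF g_nonneg g_sums d] False k unfolding hazard_def by simp
    hence "mdhr g * (1 - Gcdf g k) \<le> g d" using pos by (simp add: pos_le_divide_eq)
    thus ?thesis using G k by (simp add: algebra_simps)
  qed
qed


lemma A_rec:
  fixes A a :: "nat \<Rightarrow> real"
  assumes A_def: "\<And>t. A t = 1 - c * (\<Sum>u=1..<t. a u * (1 - Gcdf g (t - u)))"
    and m: "m \<ge> 1"
  shows "A (Suc m) = A m - c * a m + c * (\<Sum>t=1..m. a t * g (Suc m - t))"
proof -
  have e1: "(\<Sum>u=1..<Suc m. a u * (1 - Gcdf g (Suc m - u)))
      = (\<Sum>u=1..m. a u * (1 - Gcdf g (m - u)) - a u * g (Suc m - u))"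
  proof (rule sum.cong)
    fix u assume "u \<in> {1..m}"
    hence "Suc m - u = Suc (m - u)" by auto
    thus "a u * (1 - Gcdf g (Suc m - u)) = a u * (1 - Gcdf g (m - u)) - a u * g (Suc m - u)"
      by (simp add: Gcdf_Suc algebra_simps)
  qed (auto)
  have e2: "(\<Sum>u=1..m. a u * (1 - Gcdf g (m - u)) - a u * g (Suc m - u)) = (\<Sum>u=1..m. a u * (1 - Gcdf g (m - u))) - (\<Sum>u=1..m. a u * g (Suc m - u))"
    by (simp only: sum_subtractf)
  have e3: "(\<Sum>u=1..m. a u * (1 - Gcdf g (m - u))) = (\<Sum>u=1..<m. a u * (1 - Gcdf g (m - u))) + a m"
    using m by (cases m) (auto simp: atLeastLessThanSuc_atLeastAtMost[symmetric])
  have "A (Suc m) = 1 - c * (\<Sum>u=1..<Suc m. a u * (1 - Gcdf g (Suc m - u)))" by (rule A_def)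
  also have "\<dots> = 1 - c * ((\<Sum>u=1..<m. a u * (1 - Gcdf g (m - u))) + a m - (\<Sum>u=1..m. a u * g (Suc m - u)))"
    unfolding e1 e2 e3 ..
  also have "\<dots> = (1 - c * (\<Sum>u=1..<m. a u * (1 - Gcdf g (m - u)))) - c * a m + c * (\<Sum>u=1..m. a u * g (Suc m - u))"
    by (simp add: algebra_simps)
  finally show ?thesis unfolding A_def[of m] .
qed

lemma telesc:
  fixes A a J :: "nat \<Rightarrow> real"
  assumes A_def: "\<And>t. A t = 1 - c * (\<Sum>u=1..<t. a u * (1 - Gcdf g (t - u)))"
  shows "(\<Sum>t=1..Suc n. A t * (J t - J (t+1)) - c * (a t * ((\<Sum>\<tau>=t+1..Suc n. g (\<tau> - t) * J \<tau>) - J (t+1))))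
     = J 1 - (A (Suc n) - c * a (Suc n)) * J (Suc n + 1)"
proof (induction n)
  case 0
  have "A 1 = 1" using A_def[of 1] by simp
  thus ?case by (simp add: algebra_simps)
next
  case (Suc n)
  let ?N = "Suc (Suc n)"
  have split: "(\<Sum>t=1..?N. A t * (J t - J (t+1)) - c * (a t * ((\<Sum>\<tau>=t+1..?N. g (\<tau> - t) * J \<tau>) - J (t+1))))
     = (\<Sum>t=1..Suc n. A t * (J t - J (t+1)) - c * (a t * ((\<Sum>\<tau>=t+1..?N. g (\<tau> - t) * J \<tau>) - J (t+1))))
       + (A ?N * (J ?N - J (?N+1)) + c * a ?N * J (?N + 1))"
    by (simp add: algebra_simps)
  have inner: "(\<Sum>t=1..Suc n. A t * (J t - J (t+1)) - c * (a t * ((\<Sum>\<tau>=t+1..?N. g (\<tau> - t) * J \<tau>) - J (t+1))))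
     = (\<Sum>t=1..Suc n. (A t * (J t - J (t+1)) - c * (a t * ((\<Sum>\<tau>=t+1..Suc n. g (\<tau> - t) * J \<tau>) - J (t+1))))
          - c * (a t * g (?N - t)) * J ?N)"
  proof (rule sum.cong)
    fix t assume "t \<in> {1..Suc n}"
    hence "(\<Sum>\<tau>=t+1..?N. g (\<tau> - t) * J \<tau>) = (\<Sum>\<tau>=t+1..Suc n. g (\<tau> - t) * J \<tau>) + g (?N - t) * J ?N"
      by (subst sum.cl_ivl_Suc) auto
    thus "A t * (J t - J (t+1)) - c * (a t * ((\<Sum>\<tau>=t+1..?N. g (\<tau> - t) * J \<tau>) - J (t+1)))
       = (A t * (J t - J (t+1)) - c * (a t * ((\<Sum>\<tau>=t+1..Suc n. g (\<tau> - t) * J \<tau>) - J (t+1))))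
          - c * (a t * g (?N - t)) * J ?N" by (simp add: algebra_simps)
  qed simp
  have rec: "A ?N = A (Suc n) - c * a (Suc n) + c * (\<Sum>t=1..Suc n. a t * g (?N - t))"
    by (rule A_rec[OF A_def]) simp
  have s2: "(\<Sum>t=1..Suc n. c * (a t * g (?N - t)) * J ?N) = c * (\<Sum>t=1..Suc n. a t * g (?N - t)) * J ?N"
    by (simp only: sum_distrib_left sum_distrib_right)
  have e: "(\<Sum>t=1..Suc n. (A t * (J t - J (t+1)) - c * (a t * ((\<Sum>\<tau>=t+1..Suc n. g (\<tau> - t) * J \<tau>) - J (t+1))))
          - c * (a t * g (?N - t)) * J ?N) = (J 1 - (A (Suc n) - c * a (Suc n)) * J (Suc n + 1))
          - c * (\<Sum>t=1..Suc n. a t * g (?N - t)) * J ?N"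
    by (subst sum_subtractf) (simp only: Suc s2)
  show ?case
    unfolding split inner e
    by (simp add: rec algebra_simps)
qed


lemma Jvec_agree:
  "n \<le> m \<Longrightarrow> \<tau> > T - n \<Longrightarrow> SN_Jvec S T lam g xv r m \<tau> = SN_Jvec S T lam g xv r n \<tau>"
proof (induction m)
  case 0 thus ?case by simp
next
  case (Suc m)
  show ?case
  proof (cases "n = Suc m")
    case True thus ?thesis by simp
  next
    case False
    hence "n \<le> m" using Suc.prems by simp
    hence "\<tau> \<noteq> T - m" using Suc.prems by auto
    thus ?thesis using Suc.IH[OF \<open>n \<le> m\<close> Suc.prems(2)] by (simp add: Let_def)
  qed
qed

lemma Jvec_big: "\<tau> > T \<Longrightarrow> SN_Jvec S T lam g xv r m \<tau> = 0"
  by (induction m) (auto simp: Let_def)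

lemma Jstep_cong:
  assumes "\<And>\<tau>. \<tau> > t \<Longrightarrow> J \<tau> = J' \<tau>"
  shows "SN_Jstep S T lam g xv r J t = SN_Jstep S T lam g xv r J' t"
proof -
  have c: "SN_cont T g r J s t = SN_cont T g r J' s t" for s
    unfolding SN_cont_def using assms by (auto intro!: sum.cong)
  have x: "SN_xt T g xv r J s t = SN_xt T g xv r J' s t" for s
    unfolding SN_xt_def c using assms[of "t+1"] by simp
  show ?thesis unfolding SN_Jstep_def c x using assms[of "t+1"] by simp
qed

lemma Jvol_fix:
  assumes "t \<in> {1..T}"
  shows "SN_Jvol S T lam g xv r t = SN_Jstep S T lam g xv r (SN_Jvol S T lam g xv r) t"
proof -
  define n where "n = T - t"
  have n: "n < T" "T - n = t" using assms by (auto simp: n_def)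
  have "SN_Jvol S T lam g xv r t = SN_Jvec S T lam g xv r (Suc n) t"
    unfolding SN_Jvol_def using n by (intro Jvec_agree) auto
  also have "\<dots> = SN_Jstep S T lam g xv r (SN_Jvec S T lam g xv r n) t"
    using n by (simp add: Let_def)
  also have "\<dots> = SN_Jstep S T lam g xv r (SN_Jvol S T lam g xv r) t"
    unfolding SN_Jvol_def using n by (intro Jstep_cong Jvec_agree[symmetric]) auto
  finally show ?thesis .
qed

lemma Jvol_big: "SN_Jvol S T lam g xv r (T+1) = 0"
  unfolding SN_Jvol_def by (rule Jvec_big) simp

lemma Jstep_eq:
  "SN_Jstep S T lam g xv r J t = J (t+1) +
     (\<Sum>s=1..S. lam s t * SN_xt T g xv r J s t * (SN_cont T g r J s t - J (t+1)))"
proof -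
  let ?J = "J (t+1)"
  have "(\<Sum>s=1..S. lam s t * ((1 - SN_xt T g xv r J s t) * ?J + SN_xt T g xv r J s t * SN_cont T g r J s t))
     = (\<Sum>s=1..S. lam s t * ?J + lam s t * SN_xt T g xv r J s t * (SN_cont T g r J s t - ?J))"
    by (rule sum.cong) (simp_all add: algebra_simps)
  also have "\<dots> = (\<Sum>s=1..S. lam s t) * ?J + (\<Sum>s=1..S. lam s t * SN_xt T g xv r J s t * (SN_cont T g r J s t - ?J))"
    by (simp only: sum.distrib sum_distrib_right)
  finally show ?thesis unfolding SN_Jstep_def by (simp add: algebra_simps)
qed

lemma xt_01: "SN_xt T g xv r J s t = 0 \<or> SN_xt T g xv r J s t = xv s t"
  by (simp add: SN_xt_def)

lemma xt_cases: "SN_xt T g xv r J s t = xv s t * (if SN_cont T g r J s t \<ge> J (t + 1) then 1 else 0)"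
  by (simp add: SN_xt_def)

lemma SN_P_bound:
  assumes p_range: "\<forall>v\<in>{1..V}. \<forall>s\<in>{1..S}. 0 \<le> p v s \<and> p v s \<le> 1"
    and xr: "\<forall>v\<in>{1..V}. \<forall>s\<in>{1..S}. \<forall>t\<in>{1..T}. 0 \<le> x v s t \<and> x v s t \<le> 1"
    and s: "s \<in> {1..S}" and t: "t \<in> {1..T}"
  shows "k \<le> V \<Longrightarrow> 0 \<le> (\<Prod>u=1..k. 1 - p u s * x u s t) \<and>
            (\<Prod>u=1..k. 1 - p u s * x u s t) \<le> SN_P S T lam g p x k s t"
proof (induction k)
  case 0 thus ?case by simp
next
  case (Suc k)
  have pk: "0 \<le> p (Suc k) s" "p (Suc k) s \<le> 1" "0 \<le> x (Suc k) s t" "x (Suc k) s t \<le> 1"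
    using p_range xr s t Suc.prems by auto
  have pxle: "p (Suc k) s * x (Suc k) s t \<le> 1" using pk by (simp add: mult_le_one)
  obtain X where X: "X = 0 \<or> X = x (Suc k) s t" and
    eq: "SN_P S T lam g p x (Suc k) s t = SN_P S T lam g p x k s t * (1 - X * p (Suc k) s)"
  proof -
    define R where "R = (\<lambda>s t. p (Suc k) s * SN_P S T lam g p x k s t)"
    define JJ where "JJ = SN_Jvol S T lam g (x (Suc k)) R"
    have "SN_P S T lam g p x (Suc k) s t = SN_P S T lam g p x k s t * (1 - SN_xt T g (x (Suc k)) R JJ s t * p (Suc k) s)"
      by (simp add: Let_def R_def JJ_def)
    thus ?thesis using that xt_01[of T g "x (Suc k)" R JJ s t] by blast
  qed
  have f1: "1 - p (Suc k) s * x (Suc k) s t \<le> 1 - X * p (Suc k) s"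
    using X pk by (auto simp: mult.commute)
  have IH: "0 \<le> (\<Prod>u=1..k. 1 - p u s * x u s t)" "(\<Prod>u=1..k. 1 - p u s * x u s t) \<le> SN_P S T lam g p x k s t"
    using Suc by auto
  have pr: "(\<Prod>u=1..Suc k. 1 - p u s * x u s t) = (\<Prod>u=1..k. 1 - p u s * x u s t) * (1 - p (Suc k) s * x (Suc k) s t)"
    by simp
  show ?case unfolding pr eq
    using IH f1 pxle by (auto intro!: mult_mono)
qed


theorem lemma3:
  fixes V S T :: nat
    and lam :: "nat \<Rightarrow> nat \<Rightarrow> real"
    and p :: "nat \<Rightarrow> nat \<Rightarrow> real"
    and g :: "nat \<Rightarrow> real"
    and x :: "nat \<Rightarrow> nat \<Rightarrow> nat \<Rightarrow> real"
  assumes lam_nonneg: "\<forall>s\<in>{1..S}. \<forall>t\<in>{1..T}. lam s t \<ge> 0"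
    and lam_sum: "\<forall>t\<in>{1..T}. (\<Sum>s=1..S. lam s t) \<le> 1"
    and p_range: "\<forall>v\<in>{1..V}. \<forall>s\<in>{1..S}. 0 \<le> p v s \<and> p v s \<le> 1"
    and g_nonneg: "\<forall>i. g i \<ge> 0"
    and g_zero: "g 0 = 0"
    and g_sums: "g sums 1"
    and x_in: "in_polytope V S T lam g x"
  shows "\<forall>v\<in>{1..V}. SN_J S T lam g p x v 1 \<ge> (1 / (2 - mdhr g)) * f_obj S T lam p x v"
proof
  fix v assume v: "v \<in> {1..V}"
  have xr: "\<forall>v\<in>{1..V}. \<forall>s\<in>{1..S}. \<forall>t\<in>{1..T}. 0 \<le> x v s t \<and> x v s t \<le> 1"
    and cons: "\<forall>v\<in>{1..V}. \<forall>t\<in>{1..T}.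
        (\<Sum>\<tau>=1..t. \<Sum>s=1..S. lam s \<tau> * x v s \<tau> * (1 - Gcdf g (t - \<tau>))) \<le> 1"
    using x_in unfolding in_polytope_def by auto
  define q where "q = mdhr g"
  define c where "c = 1 / (2 - q)"
  define xv where "xv = x v"
  define r where "r = SN_r S T lam g p x v"
  define J where "J = SN_Jvol S T lam g xv r"
  define a where "a = (\<lambda>t. \<Sum>s=1..S. lam s t * xv s t)"
  define A where "A = (\<lambda>t. 1 - c * (\<Sum>u=1..<t. a u * (1 - Gcdf g (t - u))))"
  have q1: "q \<le> 1" unfolding q_def by (rule mdhr_le1[OF g_nonneg g_sums])
  have c0: "c > 0" and cq: "c * (2 - q) = 1" using q1 by (auto simp: c_def)
  have lx: "lam s t * xv s t \<ge> 0" if "s \<in> {1..S}" "t \<in> {1..T}" for s t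
    using lam_nonneg xr v that by (auto simp: xv_def)
  have a0: "a t \<ge> 0" if "t \<in> {1..T}" for t
    unfolding a_def using lx that by (auto intro!: sum_nonneg)
  have SJ: "SN_J S T lam g p x v 1 = J 1" by (simp add: SN_J_def J_def xv_def r_def)
  show "SN_J S T lam g p x v 1 \<ge> (1 / (2 - mdhr g)) * f_obj S T lam p x v"
  proof (cases T)
    case 0
    thus ?thesis by (simp add: SN_J_def SN_Jvol_def f_obj_def)
  next
    case (Suc n)
    have A_ge: "A t \<ge> c" if t: "t \<in> {1..T}" for t
    proof -
      have s1: "(\<Sum>u=1..<t. a u * (1 - Gcdf g (t - u))) \<le> (\<Sum>u=1..<t. (1 - q) * (a u * (1 - Gcdf g (t - 1 - u))))"
      proof (rule sum_mono)
        fix u assume u: "u \<in> {1..<t}"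
        have "1 - Gcdf g (t - u) \<le> (1 - q) * (1 - Gcdf g (t - u - 1))"
          unfolding q_def using u by (intro tail_bound[OF g_nonneg g_sums]) auto
        moreover have "a u \<ge> 0" using u t a0 by auto
        ultimately show "a u * (1 - Gcdf g (t - u)) \<le> (1 - q) * (a u * (1 - Gcdf g (t - 1 - u)))"
          by (metis (no_types, lifting) diff_commute mult.left_commute mult_left_mono)
      qed
      have s2: "(\<Sum>u=1..<t. a u * (1 - Gcdf g (t - 1 - u))) \<le> 1"
      proof (cases "t = 1")
        case True thus ?thesis by simp
      next
        case False
        hence t1: "t - 1 \<in> {1..T}" using t by auto
        have "(\<Sum>u=1..<t. a u * (1 - Gcdf g (t - 1 - u)))
            = (\<Sum>\<tau>=1..t-1. \<Sum>s=1..S. lam s \<tau> * x v s \<tau> * (1 - Gcdf g (t - 1 - \<tau>)))"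
          unfolding a_def xv_def sum_distrib_right
          by (rule sum.cong) (use t in auto)
        also have "\<dots> \<le> 1" using cons v t1 by blast
        finally show ?thesis .
      qed
      have "(\<Sum>u=1..<t. a u * (1 - Gcdf g (t - u))) \<le> 1 - q"
        using s1 s2 q1 by (simp add: sum_distrib_left[symmetric]) (smt (verit) mult_left_le)
      hence "c * (\<Sum>u=1..<t. a u * (1 - Gcdf g (t - u))) \<le> c * (1 - q)"
        using c0 by (simp add: mult_left_mono)
      thus ?thesis unfolding A_def using cq by (simp add: algebra_simps)
    qed
    have step: "A t * (J t - J (t+1)) - c * (a t * ((\<Sum>\<tau>=t+1..T. g (\<tau> - t) * J \<tau>) - J (t+1)))
        \<ge> c * (\<Sum>s=1..S. lam s t * xv s t * r s t)" if t: "t \<in> {1..T}" for t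
    proof -
      have Jt: "J t = J (t+1) + (\<Sum>s=1..S. lam s t * SN_xt T g xv r J s t * (SN_cont T g r J s t - J (t+1)))"
        unfolding J_def by (subst Jvol_fix[OF t]) (simp only: Jstep_eq)
      have "A t * (J t - J (t+1)) = (\<Sum>s=1..S. A t * (lam s t * SN_xt T g xv r J s t * (SN_cont T g r J s t - J (t+1))))"
        unfolding Jt by (simp add: sum_distrib_left)
      also have "\<dots> \<ge> (\<Sum>s=1..S. c * (lam s t * xv s t * (SN_cont T g r J s t - J (t+1))))"
      proof (rule sum_mono)
        fix s assume s: "s \<in> {1..S}"
        have l: "lam s t * xv s t \<ge> 0" using lx s t by auto
        have Ac: "A t \<ge> c" using A_ge t by auto
        show "c * (lam s t * xv s t * (SN_cont T g r J s t - J (t+1)))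
           \<le> A t * (lam s t * SN_xt T g xv r J s t * (SN_cont T g r J s t - J (t+1)))"
        proof (cases "SN_cont T g r J s t \<ge> J (t + 1)")
          case True
          hence "lam s t * xv s t * (SN_cont T g r J s t - J (t+1)) \<ge> 0" using l by simp
          thus ?thesis using True Ac by (simp add: xt_cases mult_right_mono)
        next
          case False
          hence "lam s t * xv s t * (SN_cont T g r J s t - J (t+1)) \<le> 0" using l
            by (simp add: mult_nonneg_nonpos)
          thus ?thesis using False c0 by (simp add: xt_cases mult_nonneg_nonpos)
        qed
      qed
      also have "(\<Sum>s=1..S. c * (lam s t * xv s t * (SN_cont T g r J s t - J (t+1))))
          = c * (\<Sum>s=1..S. lam s t * xv s t * r s t) + c * (a t * ((\<Sum>\<tau>=t+1..T. g (\<tau> - t) * J \<tau>) - J (t+1)))"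
        unfolding a_def SN_cont_def
        by (simp add: sum_distrib_left sum_distrib_right sum.distrib[symmetric] algebra_simps)
      finally show ?thesis by simp
    qed
    have tel: "(\<Sum>t=1..T. A t * (J t - J (t+1)) - c * (a t * ((\<Sum>\<tau>=t+1..T. g (\<tau> - t) * J \<tau>) - J (t+1)))) = J 1"
    proof -
      have "J (Suc n + 1) = 0" using Jvol_big Suc unfolding J_def by metis
      moreover have Adef: "\<And>t. A t = 1 - c * (\<Sum>u=1..<t. a u * (1 - Gcdf g (t - u)))"
        by (simp add: A_def)
      ultimately show ?thesis using telesc[OF Adef, where n=n and J=J] Suc by simp
    qed
    have rr: "lam s t * xv s t * r s t \<ge> lam s t * (\<Prod>u=1..<v. (1 - p u s * x u s t)) * p v s * x v s t"
      if s: "s \<in> {1..S}" and t: "t \<in> {1..T}" for s t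
    proof -
      have "v - 1 \<le> V" using v by auto
      from SN_P_bound[OF p_range xr s t this]
      have P: "(\<Prod>u=1..v-1. 1 - p u s * x u s t) \<le> SN_P S T lam g p x (v - 1) s t" by blast
      have e: "{1..<v} = {1..v-1}" using v by auto
      have "p v s \<ge> 0" using p_range v s by auto
      hence "p v s * (\<Prod>u=1..<v. (1 - p u s * x u s t)) \<le> r s t"
        unfolding r_def SN_r_def e using P by (simp add: mult_left_mono)
      from mult_left_mono[OF this lx[OF s t]] show ?thesis by (simp add: xv_def algebra_simps)
    qed
    have "c * f_obj S T lam p x v \<le> c * (\<Sum>t=1..T. \<Sum>s=1..S. lam s t * xv s t * r s t)"
      unfolding f_obj_def using c0 rr by (auto intro!: mult_left_mono sum_mono)
    also have "\<dots> = (\<Sum>t=1..T. c * (\<Sum>s=1..S. lam s t * xv s t * r s t))"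
      by (simp add: sum_distrib_left)
    also have "\<dots> \<le> J 1" unfolding tel[symmetric] using step by (intro sum_mono) auto
    finally show ?thesis using SJ by (simp add: c_def q_def)
  qed
qed

end
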